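(* Let $\sigma$ be the continuous schedule constructed from an optimal solution $\{y^F_j\}$ of $\mathsf{LP}_\mathsf{primal}$ as described in the context, and for $\lambda\in(0,1]$ let $\sigma^\lambda$ be its stretch by factor $1/\lambda$. If $\lambda$ is drawn at random from $[0,1]$ with probability density $f(v)=2v$, then $$\mathbb{E}\Big[\sum_{j\in J} w_j\, C_{\sigma^\lambda}(j)\Big]\ \le\ 2\sum_{j\in J} w_j\int_0^1 \tilde C_j(v)\,dv .$$
   Context: Co-flow scheduling: $m$ input ports, $m$ output ports, jobs $j\in J$ with weights $w_j\ge0$, integer release times $r_j\ge0$, and nonnegative integer demands $d^j_{io}$ (packets to send from input port $i$ to output port $o$). In each integer time slot $t$ (the interval $[t-1,t)$) each input port sends and each output port receives at most one packet; packets of $j$ may only be sent in slots $t>r_j$. Let $T$ be a positive integer time horizon. A configuration for job $j$ is a set $F$ of triples $(i,o,t)$ with $i,o\in[m]$, $t\in\{r_j+1,\dots,T\}$, such that for each $(i,o)$ exactly $d^j_{io}$ triples of $F$ have ports $(i,o)$, and for each $(i,t)$ at most one triple of $F$ has input port $i$ and time $t$, and for each $(o,t)$ at most one triple has output port $o$ and time $t$. Let $\mathcal F(j)$ be the set of configurations of $j$ and $C^F_j=\max\{t:(i,o,t)\in F\}$. $\mathsf{LP}_\mathsf{primal}$ is: minimize $\sum_j w_j\sum_{F\in\mathcal F(j)}C^F_j y^F_j$ subject to $\sum_{F\in\mathcal F(j)}y^F_j\ge1$ for all $j$; $\sum_{j,o}\sum_{F\in\mathcal F(j):(i,o,t)\in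 F}y^F_j\le1$ for all $i\in[m],t\in[T]$; $\sum_{j,i}\sum_{F\in\mathcal F(j):(i,o,t)\in F}y^F_j\le1$ for all $o\in[m],t\in[T]$; $y\ge0$. Given an optimal solution $y$, set $x^{jt}_{io}=\sum_{F\in\mathcal F(j):(i,o,t)\in F}y^F_j$. The continuous schedule $\sigma$ transfers data of job $j$ from $i$ to $o$ at rate $\sigma_{io,j}(\tau)=x^{jt}_{io}$ for all $\tau\in[t-1,t)$ (realized, via a Birkhoff–von Neumann decomposition of the fractional matching of slot $t$, by integral matchings spread uniformly over $[t-1,t)$). For $v\in[0,1]$, $\tilde C_j(v)$ is the earliest time $\tau$ such that $\int_0^\tau\sigma_{io,j}(s)\,ds\ge v\,d^j_{io}$ for all $i,o$. The stretched schedule $\sigma^\lambda$ schedules in $[\tau_1/\lambda,\tau_2/\lambda)$ whatever matching $\sigma$ schedules in $[\tau_1,\tau_2)$; thus the amount of job $j$'s $(i,o)$ data transferred by time $\tau$ in $\sigma^\lambda$ is $\frac1\lambda\int_0^{\lambda\tau}\sigma_{io,j}(s)\,ds$. $C_{\sigma^\lambda}(j)$ is the earliest time at which, in $\sigma^\lambda$, at least $d^j_{io}$ units of job $j$'s data have been transferred from $i$ to $o$ for every pair $(i,o)$. *)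

theory Defs
  imports "HOL-Analysis.Analysis"
begin

text \<open>Ports are [m] = {1..m}, time slots are {1..T}; slot t is the interval [t-1,t).
  A triple (i,q,t) is represented as (i,(q,t)) :: nat \<times> nat \<times> nat.\<close>

type_synonym triple = "nat \<times> nat \<times> nat"

definition is_config ::
  "nat \<Rightarrow> nat \<Rightarrow> ('j \<Rightarrow> nat) \<Rightarrow> ('j \<Rightarrow> nat \<Rightarrow> nat \<Rightarrow> nat) \<Rightarrow> 'j \<Rightarrow> triple set \<Rightarrow> bool" where
  "is_config m T r d j F \<longleftrightarrow>
     F \<subseteq> {1..m} \<times> {1..m} \<times> {r j + 1..T} \<and>
     (\<forall>i\<in>{1..m}. \<forall>q\<in>{1..m}. card {e \<in> F. fst e = i \<and> fst (snd e) = q} = d j i q) \<and>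
     (\<forall>i t. card {e \<in> F. fst e = i \<and> snd (snd e) = t} \<le> 1) \<and>
     (\<forall>q t. card {e \<in> F. fst (snd e) = q \<and> snd (snd e) = t} \<le> 1)"

definition configs ::
  "nat \<Rightarrow> nat \<Rightarrow> ('j \<Rightarrow> nat) \<Rightarrow> ('j \<Rightarrow> nat \<Rightarrow> nat \<Rightarrow> nat) \<Rightarrow> 'j \<Rightarrow> triple set set" where
  "configs m T r d j = {F. is_config m T r d j F}"

text \<open>Completion time of a configuration: largest time slot used (0 for the empty configuration).\<close>
definition config_completion :: "triple set \<Rightarrow> nat" where
  "config_completion F = Sup {t. \<exists>i q. (i, q, t) \<in> F}"

definition lp_feasible ::
  "nat \<Rightarrow> nat \<Rightarrow> 'j set \<Rightarrow> ('j \<Rightarrow> nat) \<Rightarrow> ('j \<Rightarrow> nat \<Rightarrow> nat \<Rightarrow> nat)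
   \<Rightarrow> ('j \<Rightarrow> triple set \<Rightarrow> real) \<Rightarrow> bool" where
  "lp_feasible m T J r d y \<longleftrightarrow>
     (\<forall>j\<in>J. \<forall>F\<in>configs m T r d j. y j F \<ge> 0) \<and>
     (\<forall>j\<in>J. (\<Sum>F\<in>configs m T r d j. y j F) \<ge> 1) \<and>
     (\<forall>i\<in>{1..m}. \<forall>t\<in>{1..T}.
        (\<Sum>j\<in>J. \<Sum>q\<in>{1..m}. \<Sum>F\<in>{F\<in>configs m T r d j. (i, q, t) \<in> F}. y j F) \<le> 1) \<and>
     (\<forall>q\<in>{1..m}. \<forall>t\<in>{1..T}.
        (\<Sum>j\<in>J. \<Sum>i\<in>{1..m}. \<Sum>F\<in>{F\<in>configs m T r d j. (i, q, t) \<in> F}. y j F) \<le> 1)"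

definition lp_objective ::
  "nat \<Rightarrow> nat \<Rightarrow> 'j set \<Rightarrow> ('j \<Rightarrow> real) \<Rightarrow> ('j \<Rightarrow> nat) \<Rightarrow> ('j \<Rightarrow> nat \<Rightarrow> nat \<Rightarrow> nat)
   \<Rightarrow> ('j \<Rightarrow> triple set \<Rightarrow> real) \<Rightarrow> real" where
  "lp_objective m T J w r d y =
     (\<Sum>j\<in>J. w j * (\<Sum>F\<in>configs m T r d j. real (config_completion F) * y j F))"

definition lp_optimal ::
  "nat \<Rightarrow> nat \<Rightarrow> 'j set \<Rightarrow> ('j \<Rightarrow> real) \<Rightarrow> ('j \<Rightarrow> nat) \<Rightarrow> ('j \<Rightarrow> nat \<Rightarrow> nat \<Rightarrow> nat)
   \<Rightarrow> ('j \<Rightarrow> triple set \<Rightarrow> real) \<Rightarrow> bool" where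
  "lp_optimal m T J w r d y \<longleftrightarrow>
     lp_feasible m T J r d y \<and>
     (\<forall>y'. lp_feasible m T J r d y' \<longrightarrow> lp_objective m T J w r d y \<le> lp_objective m T J w r d y')"

definition xval ::
  "nat \<Rightarrow> nat \<Rightarrow> ('j \<Rightarrow> nat) \<Rightarrow> ('j \<Rightarrow> nat \<Rightarrow> nat \<Rightarrow> nat) \<Rightarrow> ('j \<Rightarrow> triple set \<Rightarrow> real)
   \<Rightarrow> 'j \<Rightarrow> nat \<Rightarrow> nat \<Rightarrow> nat \<Rightarrow> real" where
  "xval m T r d y j i q t = (\<Sum>F\<in>{F\<in>configs m T r d j. (i, q, t) \<in> F}. y j F)"

text \<open>Rate of the continuous schedule: on [t-1,t) it equals x^{jt}_{io}, i.e. t = floor s + 1.\<close>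
definition sigma_rate ::
  "nat \<Rightarrow> nat \<Rightarrow> ('j \<Rightarrow> nat) \<Rightarrow> ('j \<Rightarrow> nat \<Rightarrow> nat \<Rightarrow> nat) \<Rightarrow> ('j \<Rightarrow> triple set \<Rightarrow> real)
   \<Rightarrow> 'j \<Rightarrow> nat \<Rightarrow> nat \<Rightarrow> real \<Rightarrow> real" where
  "sigma_rate m T r d y j i q s = (if s < 0 then 0 else xval m T r d y j i q (nat \<lfloor>s\<rfloor> + 1))"

definition cum_amount ::
  "nat \<Rightarrow> nat \<Rightarrow> ('j \<Rightarrow> nat) \<Rightarrow> ('j \<Rightarrow> nat \<Rightarrow> nat \<Rightarrow> nat) \<Rightarrow> ('j \<Rightarrow> triple set \<Rightarrow> real)
   \<Rightarrow> 'j \<Rightarrow> nat \<Rightarrow> nat \<Rightarrow> real \<Rightarrow> real" where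
  "cum_amount m T r d y j i q tau = integral {0..tau} (sigma_rate m T r d y j i q)"

definition C_tilde ::
  "nat \<Rightarrow> nat \<Rightarrow> ('j \<Rightarrow> nat) \<Rightarrow> ('j \<Rightarrow> nat \<Rightarrow> nat \<Rightarrow> nat) \<Rightarrow> ('j \<Rightarrow> triple set \<Rightarrow> real)
   \<Rightarrow> 'j \<Rightarrow> real \<Rightarrow> real" where
  "C_tilde m T r d y j v = Inf {tau. 0 \<le> tau \<and>
      (\<forall>i\<in>{1..m}. \<forall>q\<in>{1..m}. cum_amount m T r d y j i q tau \<ge> v * real (d j i q))}"

text \<open>Completion time of job j in the stretched schedule sigma^lambda: the amount transferred
  by time tau in sigma^lambda is (1/lambda) * int_0^{lambda tau} sigma.\<close>
definition C_stretch ::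
  "nat \<Rightarrow> nat \<Rightarrow> ('j \<Rightarrow> nat) \<Rightarrow> ('j \<Rightarrow> nat \<Rightarrow> nat \<Rightarrow> nat) \<Rightarrow> ('j \<Rightarrow> triple set \<Rightarrow> real)
   \<Rightarrow> 'j \<Rightarrow> real \<Rightarrow> real" where
  "C_stretch m T r d y j lam = Inf {tau. 0 \<le> tau \<and>
      (\<forall>i\<in>{1..m}. \<forall>q\<in>{1..m}. (1 / lam) * cum_amount m T r d y j i q (lam * tau) \<ge> real (d j i q))}"

definition lambda_dist :: "real measure" where
  "lambda_dist = density lborel (\<lambda>v. ennreal (2 * v) * indicator {0..1} v)"

end

theory Submission
  imports Defs
begin

lemma sigma_int:
  "((sigma_rate m T r d y j i q) has_integral (\<Sum>t\<in>{1..n}. xval m T r d y j i q t)) {0..real n}"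
proof (induction n)
  case 0
  then show ?case using has_integral_refl(2)[of "sigma_rate m T r d y j i q" 0] by simp
next
  case (Suc n)
  have c: "((\<lambda>s. xval m T r d y j i q (Suc n)) has_integral xval m T r d y j i q (Suc n)) {real n..real (Suc n)}"
    using has_integral_const_real[of "xval m T r d y j i q (Suc n)" "real n" "real (Suc n)"] by simp
  have s: "(sigma_rate m T r d y j i q has_integral xval m T r d y j i q (Suc n)) {real n..real (Suc n)}"
  proof (rule has_integral_spike[OF _ _ c])
    show "negligible {real (Suc n)}" by simp
    fix x assume x: "x \<in> {real n..real (Suc n)} - {real (Suc n)}"
    then have "nat \<lfloor>x\<rfloor> = n"
      by (simp add: floor_eq_iff nat_eq_iff)
    then show "sigma_rate m T r d y j i q x = xval m T r d y j i q (Suc n)"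
      using x by (simp add: sigma_rate_def)
  qed
  have "(sigma_rate m T r d y j i q has_integral (\<Sum>t\<in>{1..n}. xval m T r d y j i q t) + xval m T r d y j i q (Suc n)) {0..real (Suc n)}"
    by (rule has_integral_combine[OF _ _ Suc s]) auto
  moreover have "(\<Sum>t\<in>{1..Suc n}. xval m T r d y j i q t) = (\<Sum>t\<in>{1..n}. xval m T r d y j i q t) + xval m T r d y j i q (Suc n)"
    by simp
  ultimately show ?case by simp
qed

lemma cum_nat: "cum_amount m T r d y j i q (real n) = (\<Sum>t\<in>{1..n}. xval m T r d y j i q t)"
  unfolding cum_amount_def by (rule integral_unique[OF sigma_int])

lemma configs_finite: "finite (configs m T r d j)"
proof -
  have "configs m T r d j \<subseteq> Pow ({1..m} \<times> {1..m} \<times> {r j + 1..T})"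
    by (auto simp: configs_def is_config_def)
  then show ?thesis by (rule finite_subset) simp
qed

lemma sum_xval:
  assumes feas: "lp_feasible m T J r d y" and j: "j \<in> J" and i: "i \<in> {1..m}" and q: "q \<in> {1..m}"
  shows "(\<Sum>t\<in>{1..T}. xval m T r d y j i q t) \<ge> real (d j i q)"
proof -
  let ?C = "configs m T r d j"
  have fin: "finite ?C" by (rule configs_finite)
  have "(\<Sum>t\<in>{1..T}. xval m T r d y j i q t)
      = (\<Sum>t\<in>{1..T}. \<Sum>F\<in>{F\<in>?C. (i, q, t) \<in> F}. y j F)"
    by (simp add: xval_def)
  also have "\<dots> = (\<Sum>F\<in>?C. \<Sum>t\<in>{t\<in>{1..T}. (i, q, t) \<in> F}. y j F)"
    by (rule sum.swap_restrict) (auto simp: fin)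
  also have "\<dots> = (\<Sum>F\<in>?C. real (d j i q) * y j F)"
  proof (rule sum.cong[OF refl])
    fix F assume F: "F \<in> ?C"
    then have cf: "is_config m T r d j F" by (simp add: configs_def)
    have eq: "{t\<in>{1..T}. (i, q, t) \<in> F} = (\<lambda>e. snd (snd e)) ` {e \<in> F. fst e = i \<and> fst (snd e) = q}"
    proof (rule set_eqI, rule iffI)
      fix t assume "t \<in> {t\<in>{1..T}. (i, q, t) \<in> F}"
      then show "t \<in> (\<lambda>e. snd (snd e)) ` {e \<in> F. fst e = i \<and> fst (snd e) = q}"
        by (intro rev_image_eqI[of "(i, q, t)"]) auto
    next
      fix t assume "t \<in> (\<lambda>e. snd (snd e)) ` {e \<in> F. fst e = i \<and> fst (snd e) = q}"
      then obtain a b where ab: "(a, b, t) \<in> F" "a = i" "b = q" by force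
      have "F \<subseteq> {1..m} \<times> {1..m} \<times> {r j + 1..T}" using cf unfolding is_config_def by blast
      with ab have "t \<in> {r j + 1..T}" by blast
      with ab show "t \<in> {t\<in>{1..T}. (i, q, t) \<in> F}" by auto
    qed
    have inj: "inj_on (\<lambda>e. snd (snd e)) {e \<in> F. fst e = i \<and> fst (snd e) = q}"
      by (auto simp: inj_on_def prod_eq_iff)
    have "card {t\<in>{1..T}. (i, q, t) \<in> F} = d j i q"
      unfolding eq card_image[OF inj] using cf i q unfolding is_config_def by blast
    then show "(\<Sum>t\<in>{t\<in>{1..T}. (i, q, t) \<in> F}. y j F) = real (d j i q) * y j F" by simp
  qed
  also have "\<dots> = real (d j i q) * (\<Sum>F\<in>?C. y j F)" by (simp add: sum_distrib_left)
  also have "\<dots> \<ge> real (d j i q) * 1"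
    using feas j unfolding lp_feasible_def by (intro mult_left_mono) auto
  finally show ?thesis by simp
qed


lemma cum_zero: "cum_amount m T r d y j i q 0 = 0"
  using cum_nat[of m T r d y j i q 0] by simp

lemma T_in_S:
  assumes feas: "lp_feasible m T J r d y" and j: "j \<in> J" and v: "v \<le> 1"
  shows "real T \<in> {tau. 0 \<le> tau \<and> (\<forall>i\<in>{1..m}. \<forall>q\<in>{1..m}. cum_amount m T r d y j i q tau \<ge> v * real (d j i q))}"
proof -
  have "cum_amount m T r d y j i q (real T) \<ge> v * real (d j i q)" if i: "i \<in> {1..m}" and q: "q \<in> {1..m}" for i q
  proof -
    have "v * real (d j i q) \<le> 1 * real (d j i q)" using v by (intro mult_right_mono) auto
    also have "\<dots> \<le> cum_amount m T r d y j i q (real T)"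
      using sum_xval[OF feas j i q] by (simp add: cum_nat)
    finally show ?thesis .
  qed
  then show ?thesis by auto
qed

lemma Ct_bounds:
  assumes feas: "lp_feasible m T J r d y" and j: "j \<in> J" and v: "v \<le> 1"
  shows "0 \<le> C_tilde m T r d y j v \<and> C_tilde m T r d y j v \<le> real T"
proof -
  let ?S = "{tau. 0 \<le> tau \<and> (\<forall>i\<in>{1..m}. \<forall>q\<in>{1..m}. cum_amount m T r d y j i q tau \<ge> v * real (d j i q))}"
  have T: "real T \<in> ?S" by (rule T_in_S[OF feas j v])
  have bdd: "bdd_below ?S" by (rule bdd_belowI[of _ 0]) auto
  have ne: "?S \<noteq> {}" using T by blast
  have "0 \<le> Inf ?S" by (rule cInf_greatest[OF ne]) auto
  moreover have "Inf ?S \<le> real T" by (rule cInf_lower[OF T bdd])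
  ultimately show ?thesis unfolding C_tilde_def by simp
qed

lemma Ct_zero: "C_tilde m T r d y j 0 = 0"
  unfolding C_tilde_def by (rule cInf_eq_minimum) (auto simp: cum_zero)

lemma Ct_mono:
  assumes feas: "lp_feasible m T J r d y" and j: "j \<in> J"
  shows "mono_on {0..1} (C_tilde m T r d y j)"
proof (rule mono_onI)
  fix u v :: real assume u: "u \<in> {0..1}" and v: "v \<in> {0..1}" and uv: "u \<le> v"
  let ?S = "\<lambda>v. {tau. 0 \<le> tau \<and> (\<forall>i\<in>{1..m}. \<forall>q\<in>{1..m}. cum_amount m T r d y j i q tau \<ge> v * real (d j i q))}"
  have v1: "v \<le> 1" using v by simp
  have ne: "?S v \<noteq> {}" using T_in_S[OF feas j v1] by blast
  have bdd: "bdd_below (?S u)" by (rule bdd_belowI[of _ 0]) auto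
  have sub: "?S v \<subseteq> ?S u"
  proof
    fix tau assume t: "tau \<in> ?S v"
    have "u * real (d j i q) \<le> cum_amount m T r d y j i q tau" if iq: "i \<in> {1..m}" "q \<in> {1..m}" for i q
    proof -
      have "u * real (d j i q) \<le> v * real (d j i q)" using uv by (intro mult_right_mono) auto
      also have "\<dots> \<le> cum_amount m T r d y j i q tau" using t iq by blast
      finally show ?thesis .
    qed
    then show "tau \<in> ?S u" using t by blast
  qed
  show "C_tilde m T r d y j u \<le> C_tilde m T r d y j v"
    unfolding C_tilde_def by (rule cInf_superset_mono[OF ne bdd sub])
qed

lemma Inf_div:
  fixes S :: "real set"
  assumes c: "c > 0" and ne: "S \<noteq> {}" and bdd: "bdd_below S"
  shows "Inf ((\<lambda>x. x / c) ` S) = Inf S / c"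
proof (rule antisym)
  have bdd2: "bdd_below ((\<lambda>x. x / c) ` S)"
  proof -
    from bdd obtain b where "\<forall>x\<in>S. b \<le> x" by (auto simp: bdd_below_def)
    then have "\<forall>z\<in>(\<lambda>x. x / c) ` S. b / c \<le> z" using c by (auto intro: divide_right_mono)
    then show ?thesis by (auto simp: bdd_below_def)
  qed
  have "c * Inf ((\<lambda>x. x / c) ` S) \<le> Inf S"
  proof (rule cInf_greatest[OF ne])
    fix x assume x: "x \<in> S"
    have "Inf ((\<lambda>x. x / c) ` S) \<le> x / c" using x by (intro cInf_lower[OF _ bdd2]) auto
    then show "c * Inf ((\<lambda>x. x / c) ` S) \<le> x" using c by (simp add: field_simps)
  qed
  then show "Inf ((\<lambda>x. x / c) ` S) \<le> Inf S / c" using c by (simp add: field_simps)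
  show "Inf S / c \<le> Inf ((\<lambda>x. x / c) ` S)"
  proof (rule cInf_greatest)
    show "(\<lambda>x. x / c) ` S \<noteq> {}" using ne by auto
    fix z assume "z \<in> (\<lambda>x. x / c) ` S"
    then obtain x where x: "x \<in> S" "z = x / c" by auto
    have "Inf S \<le> x" by (rule cInf_lower[OF x(1) bdd])
    then show "Inf S / c \<le> z" using x c by (simp add: divide_right_mono)
  qed
qed

lemma Cs_eq:
  assumes feas: "lp_feasible m T J r d y" and j: "j \<in> J" and lam: "0 < lam" "lam \<le> 1"
  shows "C_stretch m T r d y j lam = C_tilde m T r d y j lam / lam"
proof -
  let ?S = "{tau. 0 \<le> tau \<and> (\<forall>i\<in>{1..m}. \<forall>q\<in>{1..m}. cum_amount m T r d y j i q tau \<ge> lam * real (d j i q))}"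
  let ?S2 = "{tau. 0 \<le> tau \<and> (\<forall>i\<in>{1..m}. \<forall>q\<in>{1..m}. (1 / lam) * cum_amount m T r d y j i q (lam * tau) \<ge> real (d j i q))}"
  have key: "(1 / lam) * a \<ge> b \<longleftrightarrow> a \<ge> lam * b" for a b :: real
    using lam by (simp add: field_simps)
  have "?S2 = (\<lambda>x. x / lam) ` ?S"
  proof (rule set_eqI, rule iffI)
    fix tau assume "tau \<in> ?S2"
    then have "lam * tau \<in> ?S" using lam by (auto simp: le_divide_eq mult.commute)
    moreover have "tau = (lam * tau) / lam" using lam by simp
    ultimately show "tau \<in> (\<lambda>x. x / lam) ` ?S" by blast
  next
    fix tau assume "tau \<in> (\<lambda>x. x / lam) ` ?S"
    then obtain x where x: "x \<in> ?S" "tau = x / lam" by blast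
    then have "lam * tau = x" using lam by simp
    with x show "tau \<in> ?S2" using lam by (auto simp: le_divide_eq mult.commute)
  qed
  moreover have "Inf ((\<lambda>x. x / lam) ` ?S) = Inf ?S / lam"
  proof (rule Inf_div[OF lam(1)])
    show "?S \<noteq> {}" using T_in_S[OF feas j lam(2)] by blast
    show "bdd_below ?S" by (rule bdd_belowI[of _ 0]) auto
  qed
  ultimately show ?thesis unfolding C_stretch_def C_tilde_def by simp
qed


lemma Ct_integrable:
  assumes feas: "lp_feasible m T J r d y" and j: "j \<in> J"
  shows "integrable lborel (\<lambda>v. indicator {0..1} v *\<^sub>R C_tilde m T r d y j v)"
proof (rule integrableI_bounded_set[where A="{0..1}" and B="real T"])
  have "C_tilde m T r d y j \<in> borel_measurable (restrict_space borel {0..1})"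
    by (rule borel_measurable_mono_on_fnc[OF Ct_mono[OF feas j]])
  then show "(\<lambda>v. indicator {0..1} v *\<^sub>R C_tilde m T r d y j v) \<in> borel_measurable lborel"
    by (subst (asm) borel_measurable_restrict_space_iff) auto
  show "{0..1::real} \<in> sets lborel" by simp
  show "emeasure lborel {0..1::real} < \<infinity>" by simp
  show "AE x in lborel. x \<in> {0..1} \<longrightarrow> norm (indicator {0..1} x *\<^sub>R C_tilde m T r d y j x) \<le> real T"
    using Ct_bounds[OF feas j] by (auto simp: indicator_def)
  show "AE x in lborel. x \<notin> {0..1} \<longrightarrow> indicator {0..1} x *\<^sub>R C_tilde m T r d y j x = 0"
    by simp
qed

theorem lemma2:
  fixes m T :: nat and J :: "'j set" and w :: "'j \<Rightarrow> real" and r :: "'j \<Rightarrow> nat"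
    and d :: "'j \<Rightarrow> nat \<Rightarrow> nat \<Rightarrow> nat" and y :: "'j \<Rightarrow> triple set \<Rightarrow> real"
  assumes "finite J"
    and "\<forall>j\<in>J. w j \<ge> 0"
    and "T > 0"
    and "lp_optimal m T J w r d y"
  shows "(\<integral>lam. (\<Sum>j\<in>J. w j * C_stretch m T r d y j lam) \<partial>lambda_dist)
         \<le> 2 * (\<Sum>j\<in>J. w j * (\<integral>v\<in>{0..1}. C_tilde m T r d y j v \<partial>lborel))"
proof -
  have feas: "lp_feasible m T J r d y" using assms(4) by (simp add: lp_optimal_def)
  let ?g = "\<lambda>lam. \<Sum>j\<in>J. w j * C_stretch m T r d y j lam"
  let ?h = "\<lambda>j v. indicator {0..1} v *\<^sub>R C_tilde m T r d y j v"
  have rhs: "(\<Sum>j\<in>J. w j * (\<integral>v\<in>{0..1}. C_tilde m T r d y j v \<partial>lborel))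
      = (\<Sum>j\<in>J. w j * integral\<^sup>L lborel (?h j))"
    by (simp add: set_lebesgue_integral_def)
  show ?thesis
  proof (cases "integrable lambda_dist ?g")
    case False
    then have "(\<integral>lam. ?g lam \<partial>lambda_dist) = 0" by (rule not_integrable_integral_eq)
    moreover have "0 \<le> (\<Sum>j\<in>J. w j * integral\<^sup>L lborel (?h j))"
    proof (intro sum_nonneg mult_nonneg_nonneg)
      fix j assume j: "j \<in> J"
      show "0 \<le> w j" using assms(2) j by blast
      show "0 \<le> integral\<^sup>L lborel (?h j)"
        using Ct_bounds[OF feas j] by (intro Bochner_Integration.integral_nonneg) (auto simp: indicator_def)
    qed
    ultimately show ?thesis using rhs by simp
  next
    case True
    have dens: "lambda_dist = density lborel (\<lambda>v. ennreal (2 * v * indicator {0..1} v))"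
      unfolding lambda_dist_def by (intro arg_cong[where f="density lborel"] ext) (auto simp: indicator_def)
    have gm: "?g \<in> borel_measurable lborel"
    proof -
      have s: "sets lambda_dist = sets lborel" unfolding dens by (rule sets_density)
      have "?g \<in> borel_measurable lambda_dist" using True by (rule borel_measurable_integrable)
      then show ?thesis using measurable_cong_sets[OF s refl] by blast
    qed
    have "(\<integral>lam. ?g lam \<partial>lambda_dist) = (\<integral>v. (2 * v * indicator {0..1} v) *\<^sub>R ?g v \<partial>lborel)"
      unfolding dens by (rule integral_density[OF gm]) (auto simp: indicator_def)
    also have "\<dots> = (\<integral>v. (\<Sum>j\<in>J. (2 * w j) * ?h j v) \<partial>lborel)"
    proof (rule Bochner_Integration.integral_cong[OF refl])
      fix v :: real
      show "(2 * v * indicator {0..1} v) *\<^sub>R ?g v = (\<Sum>j\<in>J. (2 * w j) * ?h j v)"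
      proof (cases "v \<in> {0<..1}")
        case True
        have "(2 * v * indicator {0..1} v) *\<^sub>R ?g v = (\<Sum>j\<in>J. 2 * v * (w j * C_stretch m T r d y j v))"
          using True by (simp add: sum_distrib_left)
        also have "\<dots> = (\<Sum>j\<in>J. (2 * w j) * ?h j v)"
        proof (rule sum.cong[OF refl])
          fix j assume j: "j \<in> J"
          have "C_stretch m T r d y j v = C_tilde m T r d y j v / v"
            using True by (intro Cs_eq[OF feas j]) auto
          then show "2 * v * (w j * C_stretch m T r d y j v) = (2 * w j) * ?h j v"
            using True by (simp add: indicator_def)
        qed
        finally show ?thesis .
      next
        case False
        then consider "v = 0" | "v \<notin> {0..1}" by fastforce
        then show ?thesis
        proof cases
          case 1 then show ?thesis by (simp add: Ct_zero)
        next
          case 2 then show ?thesis by simp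
        qed
      qed
    qed
    also have "\<dots> = (\<Sum>j\<in>J. (2 * w j) * integral\<^sup>L lborel (?h j))"
      by (subst Bochner_Integration.integral_sum) (use Ct_integrable[OF feas] in \<open>auto intro!: integrable_mult_right\<close>)
    also have "\<dots> = 2 * (\<Sum>j\<in>J. w j * integral\<^sup>L lborel (?h j))"
      by (simp add: sum_distrib_left mult.assoc)
    finally show ?thesis using rhs by simp
  qed
qed

end
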